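(* Let $\Delta\ge 4$ be an integer and let $c_1,\dots,c_\Delta$ be defined by $c_\Delta=\frac{1}{\Delta}$ and $ic_i+c_{i+1}=1$ for $i=1,\dots,\Delta-1$. Then: (a) $\frac{1}{i+1}<c_i=\frac{1}{i+1}+\frac{c_{i+2}}{i(i+1)}$ for $1\le i\le \Delta-2$, and $c_i<\frac{i+1}{i(i+2)}$ for $1\le i\le \Delta-3$; (b) $c_{i+1}<c_i$ for $i=1,\dots,\Delta-2$; (c) if $i\le \Delta-2$ and $i\equiv \Delta \pmod 2$, then $$c_i=\frac{1}{i+1}+\sum_{j=1}^{\frac{\Delta-i-2}{2}}\frac{i+2j}{i(i+1)\cdots(i+2j+1)}+\frac{1}{i(i+1)\cdots\Delta};$$ (d) if $i\le \Delta-3$ and $i\equiv \Delta-1 \pmod 2$, then $$c_i=\frac{1}{i+1}+\sum_{j=1}^{\frac{\Delta-i-3}{2}}\frac{i+2j}{i(i+1)\cdots(i+2j+1)}+\frac{\Delta-1}{i(i+1)\cdots\Delta}.$$ (Here $i$ ranges over positive integers, and an empty sum equals $0$.) *)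

theory Defs
  imports Complex_Main
begin

end

theory Submission
  imports Defs
begin

lemma split_aux: "(P::real) > 0 \<Longrightarrow> a > 0 \<Longrightarrow> b > 0 \<Longrightarrow> (1/b + d/(a*b))/P = a/(P*a*b) + d/(P*a*b)"
  by (simp add: field_simps)

theorem lemma1:
  fixes \<Delta> :: nat and c :: "nat \<Rightarrow> real"
  assumes D: "\<Delta> \<ge> 4"
    and cD: "c \<Delta> = 1 / real \<Delta>"
    and rec: "\<And>i. 1 \<le> i \<Longrightarrow> i \<le> \<Delta> - 1 \<Longrightarrow> real i * c i + c (i + 1) = 1"
  shows "(\<forall>i. 1 \<le> i \<and> i \<le> \<Delta> - 2 \<longrightarrow>
            1 / real (i + 1) < c i \<and>
            c i = 1 / real (i + 1) + c (i + 2) / (real i * real (i + 1)))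
       \<and> (\<forall>i. 1 \<le> i \<and> i \<le> \<Delta> - 3 \<longrightarrow>
            c i < real (i + 1) / (real i * real (i + 2)))
       \<and> (\<forall>i. 1 \<le> i \<and> i \<le> \<Delta> - 2 \<longrightarrow> c (i + 1) < c i)
       \<and> (\<forall>i. 1 \<le> i \<and> i \<le> \<Delta> - 2 \<and> even (\<Delta> - i) \<longrightarrow>
            c i = 1 / real (i + 1)
              + (\<Sum>j = 1..(\<Delta> - i - 2) div 2.
                   real (i + 2 * j) / (\<Prod>k = i..i + 2 * j + 1. real k))
              + 1 / (\<Prod>k = i..\<Delta>. real k))
       \<and> (\<forall>i. 1 \<le> i \<and> i \<le> \<Delta> - 3 \<and> odd (\<Delta> - i) \<longrightarrow>
            c i = 1 / real (i + 1)
              + (\<Sum>j = 1..(\<Delta> - i - 3) div 2.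
                   real (i + 2 * j) / (\<Prod>k = i..i + 2 * j + 1. real k))
              + real (\<Delta> - 1) / (\<Prod>k = i..\<Delta>. real k))"
proof -
  have cdef: "c i = (1 - c (i+1)) / real i" if "1 \<le> i" "i \<le> \<Delta> - 1" for i
    using rec[OF that] that by (simp add: field_simps)
  have pos: "0 < c (\<Delta> - n) \<and> c (\<Delta> - n) < 1" if "n \<le> \<Delta> - 1" for n
    using that
  proof (induction n)
    case 0 then show ?case using cD D by simp
  next
    case (Suc n)
    define j where "j = \<Delta> - Suc n"
    have j1: "1 \<le> j" "j \<le> \<Delta> - 1" and jn: "j + 1 = \<Delta> - n" using Suc.prems by (auto simp: j_def)
    have h: "0 < c (j+1)" "c (j+1) < 1" using Suc jn by auto
    have e: "c j = (1 - c (j+1)) / real j" using cdef j1 by blast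
    have "real j \<ge> 1" using j1 by simp
    have m: "real j * c j = 1 - c (j+1)" using rec[OF j1] by simp
    have g0: "c j > 0" using m h \<open>real j \<ge> 1\<close> zero_less_mult_iff[of "real j" "c j"] by auto
    have "c j < 1"
    proof (rule ccontr)
      assume "\<not> c j < 1"
      then have "real j * c j \<ge> 1 * 1" using \<open>real j \<ge> 1\<close> by (intro mult_mono) auto
      then show False using m h by simp
    qed
    note g = g0 this
    then have "c j > 0" "c j < 1" by auto
    then show ?case by (simp add: j_def)
  qed
  have cpos: "0 < c i" "c i < 1" if "1 \<le> i" "i \<le> \<Delta>" for i
    using pos[of "\<Delta> - i"] that by auto
  have iden: "c i = 1 / real (i + 1) + c (i + 2) / (real i * real (i + 1))"
    if "1 \<le> i" "i \<le> \<Delta> - 2" for i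
  proof -
    have a: "real i * c i + c (i + 1) = 1" using rec that by auto
    have b: "real (i+1) * c (i+1) + c (i + 2) = 1" using rec[of "i+1"] that by auto
    have "real i > 0" using that by simp
    have k: "c i * (real i * real (i+1)) = real i + c (i+2)"
    proof -
      have "c i * (real i * real (i+1)) = (1 - c (i+1)) * real (i+1)" using a
        by (metis add_diff_cancel_right' mult.assoc mult.commute)
      also have "\<dots> = real (i+1) - real (i+1) * c (i+1)" by (simp add: algebra_simps)
      also have "\<dots> = real i + c (i+2)" using b by simp
      finally show ?thesis .
    qed
    have "real i * real (i+1) > 0" using that by simp
    then have "c i = (real i + c (i+2)) / (real i * real (i+1))" using k
      by (metis nonzero_mult_div_cancel_right less_irrefl)
    also have "\<dots> = 1 / real (i + 1) + c (i + 2) / (real i * real (i + 1))"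
      using \<open>real i > 0\<close> by (simp add: add_divide_distrib)
    finally show ?thesis .
  qed
  have A: "1 / real (i + 1) < c i" if "1 \<le> i" "i \<le> \<Delta> - 2" for i
  proof -
    have "c (i+2) > 0" using cpos that by auto
    moreover have "real i * real (i+1) > 0" using that by simp
    ultimately have "c (i + 2) / (real i * real (i + 1)) > 0" by simp
    then show ?thesis using iden[OF that] by linarith
  qed
  have B: "c i < real (i + 1) / (real i * real (i + 2))" if "1 \<le> i" "i \<le> \<Delta> - 3" for i
  proof -
    have c3: "c (i+2+1) > 0" using cpos that by auto
    have r2: "real (i+2) * c (i+2) + c (i+2+1) = 1" using rec[of "i+2"] that by simp
    have a: "real i * c i + c (i + 1) = 1" using rec that by auto
    have b: "real (i+1) * c (i+1) + c (i + 2) = 1" using rec[of "i+1"] that by auto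
    define x where "x = real i"
    have x0: "x > 0" using that by (simp add: x_def)
    have r2': "(x+2) * c (i+2) < 1" using r2 c3 by (simp add: x_def add.commute)
    have a': "x * c i + c (i+1) = 1" using a by (simp add: x_def)
    have b': "(x+1) * c (i+1) + c (i+2) = 1" using b by (simp add: x_def add.commute)
    have k: "c i * x * (x+1) = x + c (i+2)"
    proof -
      have "c i * x = 1 - c (i+1)" using a' by (simp add: algebra_simps)
      then have "c i * x * (x+1) = (1 - c (i+1)) * (x+1)" by simp
      also have "\<dots> = x + c (i+2)" using b' by (simp add: algebra_simps)
      finally show ?thesis .
    qed
    have "c i * x * (x+1) * (x+2) = x * (x+2) + (x+2) * c (i+2)"
      using k by (simp add: algebra_simps)
    also have "\<dots> < x * (x+2) + 1" using r2' by simp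
    also have "\<dots> = (x+1) * (x+1)" by (simp add: algebra_simps power2_eq_square)
    finally have "(c i * (x * (x+2))) * (x+1) < (x+1) * (x+1)" by (simp add: algebra_simps)
    then have "c i * (x * (x+2)) < x+1" using x0
      by (metis mult_less_cancel_right_pos add_pos_pos zero_less_one)
    moreover have "x * (x+2) > 0" using x0 by simp
    ultimately have "c i < (x+1) / (x * (x+2))" by (simp add: pos_less_divide_eq)
    then show ?thesis by (simp add: x_def add.commute)
  qed
  have C: "c (i + 1) < c i" if "1 \<le> i" "i \<le> \<Delta> - 2" for i
  proof -
    have "c (i+2) > 0" using cpos that by auto
    moreover have "c (i+1) = (1 - c (i+2)) / real (i+1)" using cdef[of "i+1"] that by simp
    ultimately have "c (i+1) < 1 / real (i+1)" by (simp add: divide_strict_right_mono)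
    then show ?thesis using A[OF that] by linarith
  qed
  have gen: "c i = 1 / real (i + 1)
              + (\<Sum>j = 1..m. real (i + 2 * j) / (\<Prod>k = i..i + 2 * j + 1. real k))
              + c (i + 2*m + 2) / (\<Prod>k = i..i + 2 * m + 1. real k)"
    if "1 \<le> i" "i + 2*m \<le> \<Delta> - 2" for i m
    using that
  proof (induction m)
    case 0
    have "(\<Prod>k = i..i + 1. real k) = real i * real (i+1)"
      by (simp add: prod.nat_ivl_Suc')
    then show ?case using iden[of i] 0 by simp
  next
    case (Suc m)
    let ?P = "\<Prod>k = i..i + 2 * m + 1. real k"
    let ?a = "i + 2*m + 2"
    have Pp: "?P > 0" using Suc.prems by (intro prod_pos) auto
    have P3: "(\<Prod>k = i..i + 2 * Suc m + 1. real k) = ?P * real ?a * real (?a + 1)"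
    proof -
      have "i + 2 * Suc m + 1 = Suc (Suc (i + 2*m + 1))" by simp
      then show ?thesis by (simp add: prod.nat_ivl_Suc' algebra_simps)
    qed
    have ida: "c ?a = 1 / real (?a + 1) + c (?a + 2) / (real ?a * real (?a + 1))"
      using iden[of ?a] Suc.prems by simp
    have IH: "c i = 1 / real (i + 1)
              + (\<Sum>j = 1..m. real (i + 2 * j) / (\<Prod>k = i..i + 2 * j + 1. real k))
              + c ?a / ?P" using Suc by simp
    have split: "c ?a / ?P = real (i + 2 * Suc m) / (\<Prod>k = i..i + 2 * Suc m + 1. real k)
        + c (i + 2 * Suc m + 2) / (\<Prod>k = i..i + 2 * Suc m + 1. real k)"
    proof -
      have e1: "i + 2 * Suc m = ?a" "i + 2 * Suc m + 2 = ?a + 2" by simp_all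
      have "real ?a > 0" by simp
      moreover have "real (?a + 1) > 0" by simp
      ultimately show ?thesis unfolding P3 unfolding e1 ida using Pp
        by (intro split_aux)
    qed
    define F where "F = (\<lambda>j. real (i + 2 * j) / (\<Prod>k = i..i + 2 * j + 1. real k))"
    have ss: "sum F {1..Suc m} = F (Suc m) + sum F {1..m}"
      by (rule sum.nat_ivl_Suc') simp
    have IH': "c i = 1 / real (i + 1) + sum F {1..m} + c ?a / ?P" using IH unfolding F_def .
    have split': "c ?a / ?P = F (Suc m) + c (i + 2 * Suc m + 2) / (\<Prod>k = i..i + 2 * Suc m + 1. real k)"
      using split unfolding F_def by simp
    have "c i = 1 / real (i + 1) + sum F {1..Suc m} + c (i + 2 * Suc m + 2) / (\<Prod>k = i..i + 2 * Suc m + 1. real k)"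
      unfolding ss using IH' split' by linarith
    then show ?case unfolding F_def .
  qed
  have Dc: "\<forall>i. 1 \<le> i \<and> i \<le> \<Delta> - 2 \<and> even (\<Delta> - i) \<longrightarrow>
            c i = 1 / real (i + 1)
              + (\<Sum>j = 1..(\<Delta> - i - 2) div 2.
                   real (i + 2 * j) / (\<Prod>k = i..i + 2 * j + 1. real k))
              + 1 / (\<Prod>k = i..\<Delta>. real k)"
  proof (intro allI impI)
    fix i assume h: "1 \<le> i \<and> i \<le> \<Delta> - 2 \<and> even (\<Delta> - i)"
    define m where "m = (\<Delta> - i - 2) div 2"
    have em: "i + 2*m + 2 = \<Delta>" using h D unfolding m_def by (auto elim!: evenE)
    have "(\<Prod>k = i..\<Delta>. real k) = (\<Prod>k = i..i + 2 * m + 1. real k) * real \<Delta>"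
    proof -
      have "\<Delta> = Suc (i + 2*m + 1)" using em by simp
      then show ?thesis by (simp add: prod.nat_ivl_Suc' mult.commute)
    qed
    then show "c i = 1 / real (i + 1)
              + (\<Sum>j = 1..(\<Delta> - i - 2) div 2.
                   real (i + 2 * j) / (\<Prod>k = i..i + 2 * j + 1. real k))
              + 1 / (\<Prod>k = i..\<Delta>. real k)"
      using gen[of i m] h em cD unfolding m_def[symmetric] by simp
  qed
  have Dd: "\<forall>i. 1 \<le> i \<and> i \<le> \<Delta> - 3 \<and> odd (\<Delta> - i) \<longrightarrow>
            c i = 1 / real (i + 1)
              + (\<Sum>j = 1..(\<Delta> - i - 3) div 2.
                   real (i + 2 * j) / (\<Prod>k = i..i + 2 * j + 1. real k))
              + real (\<Delta> - 1) / (\<Prod>k = i..\<Delta>. real k)"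
  proof (intro allI impI)
    fix i assume h: "1 \<le> i \<and> i \<le> \<Delta> - 3 \<and> odd (\<Delta> - i)"
    define m where "m = (\<Delta> - i - 3) div 2"
    have em: "i + 2*m + 3 = \<Delta>" using h D unfolding m_def by (auto elim!: oddE)
    have cD1: "c (\<Delta> - 1) = 1 / real \<Delta>"
    proof -
      have r: "real (\<Delta> - 1) * c (\<Delta> - 1) + c \<Delta> = 1" using rec[of "\<Delta> - 1"] D by simp
      define x where "x = real \<Delta>"
      have x4: "x \<ge> 4" using D by (simp add: x_def)
      have "(x - 1) * c (\<Delta> - 1) = 1 - 1/x" using r cD D by (simp add: x_def of_nat_diff)
      also have "\<dots> = (x - 1) * (1/x)" using x4 by (simp add: field_simps)
      finally have "(x - 1) * c (\<Delta> - 1) = (x - 1) * (1/x)" .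
      moreover have "x - 1 \<noteq> 0" using x4 by simp
      ultimately have "c (\<Delta> - 1) = 1/x" by (metis mult_left_cancel)
      then show ?thesis by (simp add: x_def)
    qed
    have "(\<Prod>k = i..\<Delta>. real k) = (\<Prod>k = i..i + 2 * m + 1. real k) * real (\<Delta> - 1) * real \<Delta>"
    proof -
      have "\<Delta> = Suc (Suc (i + 2*m + 1))" "\<Delta> - 1 = Suc (i + 2*m + 1)" using em by auto
      then show ?thesis by (simp add: prod.nat_ivl_Suc' algebra_simps)
    qed
    moreover have "real (\<Delta> - 1) > 0" using D by simp
    moreover have "i + 2*m + 2 = \<Delta> - 1" using em by simp
    ultimately show "c i = 1 / real (i + 1)
              + (\<Sum>j = 1..(\<Delta> - i - 3) div 2.
                   real (i + 2 * j) / (\<Prod>k = i..i + 2 * j + 1. real k))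
              + real (\<Delta> - 1) / (\<Prod>k = i..\<Delta>. real k)"
      using gen[of i m] h cD1 unfolding m_def[symmetric] by simp
  qed
  show ?thesis using A iden B C Dc Dd by blast
qed

end
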